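(* For every $d\ge 1$, no graph of the form $K_{d+1}\star G_3$ (with $G_3$ any graph on $3$ vertices) is $d$-ball packable.
   Context: $K_n$ is the complete graph on $n$ vertices, $G_3$ an arbitrary graph on $3$ vertices, $\star$ the graph join. A $d$-ball in $\hat{\mathbb R}^d$ is a closed ball, closed exterior of an open ball with $\infty$, or a closed half-space with $\infty$; a $d$-ball packing is a collection of $d$-balls with disjoint interiors; its tangency graph joins balls meeting in exactly one point; a graph is $d$-ball packable if isomorphic to the tangency graph of some $d$-ball packing. *)

theory Defs
  imports "HOL-Analysis.Analysis"
begin

text \<open>The extended space \<open>\<hat>R^d = R^d \<union> {\<infinity>}\<close> is modelled as \<open>(real^'n) option\<close>,
  with \<open>None\<close> the point at infinity and \<open>d = CARD('n)\<close>.\<close>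

definition finite_part :: "(real^'n) option set \<Rightarrow> (real^'n) set" where
  "finite_part S = {x. Some x \<in> S}"

definition is_dball :: "(real^'n) option set \<Rightarrow> bool" where
  "is_dball S \<longleftrightarrow>
     (\<exists>c r. r > 0 \<and> S = Some ` cball c r) \<or>
     (\<exists>c r. r > 0 \<and> S = insert None (Some ` (- ball c r))) \<or>
     (\<exists>a b. a \<noteq> 0 \<and> S = insert None (Some ` {x. a \<bullet> x \<le> b}))"

text \<open>Interiors in \<open>\<hat>R^d\<close>: every neighbourhood of \<infinity> contains points of \<open>R^d\<close>, so two
  d-balls have disjoint interiors in \<open>\<hat>R^d\<close> iff the interiors (in \<open>R^d\<close>) of their finite
  parts are disjoint.\<close>
definition disjoint_interiors :: "(real^'n) option set \<Rightarrow> (real^'n) option set \<Rightarrow> bool" where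
  "disjoint_interiors S T \<longleftrightarrow> interior (finite_part S) \<inter> interior (finite_part T) = {}"

definition ball_packable :: "'v set \<Rightarrow> ('v \<Rightarrow> 'v \<Rightarrow> bool) \<Rightarrow> ('v \<Rightarrow> (real^'n) option set) \<Rightarrow> bool" where
  "ball_packable V E B \<longleftrightarrow>
     inj_on B V \<and> (\<forall>v\<in>V. is_dball (B v)) \<and>
     (\<forall>u\<in>V. \<forall>v\<in>V. u \<noteq> v \<longrightarrow> disjoint_interiors (B u) (B v)) \<and>
     (\<forall>u\<in>V. \<forall>v\<in>V. u \<noteq> v \<longrightarrow> (E u v \<longleftrightarrow> (\<exists>!p. p \<in> B u \<inter> B v)))"

definition dball_packable :: "'n::finite itself \<Rightarrow> 'v set \<Rightarrow> ('v \<Rightarrow> 'v \<Rightarrow> bool) \<Rightarrow> bool" where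
  "dball_packable _ V E \<longleftrightarrow> (\<exists>B :: 'v \<Rightarrow> (real^'n) option set. ball_packable V E B)"

end

theory Submission
  imports Defs
begin


type_synonym 'n lv = "real \<times> real \<times> (real^'n)"

definition Q :: "('n::finite) lv \<Rightarrow> ('n::finite) lv \<Rightarrow> real" where
  "Q x y = snd (snd x) \<bullet> snd (snd y) - (fst x * fst (snd y) + fst (snd x) * fst y) / 2"

lemma Q_sym: "Q x y = Q y x"
  unfolding Q_def by (simp add: inner_commute algebra_simps)

lemma Q_add_left: "Q (x + y) z = Q x z + Q y z"
  unfolding Q_def by (simp add: inner_add_left algebra_simps add_divide_distrib)

lemma Q_scale_left: "Q (c *\<^sub>R x) z = c * Q x z"
  unfolding Q_def by (simp add: algebra_simps)

lemma Q_diff_left: "Q (x - y) z = Q x z - Q y z"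
  unfolding Q_def by (simp add: inner_diff_left algebra_simps diff_divide_distrib)

lemma Q_minus_left: "Q (- x) z = - Q x z"
  using Q_scale_left[of "-1" x z] by simp

lemma Q_zero_left[simp]: "Q 0 z = 0"
  unfolding Q_def by simp

lemma Q_sum_left: "Q (sum f S) z = (\<Sum>i\<in>S. Q (f i) z)"
  by (induction S rule: infinite_finite_induct) (auto simp: Q_add_left)

lemma Q_add_right: "Q z (x + y) = Q z x + Q z y"
  by (metis Q_sym Q_add_left)
lemma Q_scale_right: "Q z (c *\<^sub>R x) = c * Q z x"
  by (metis Q_sym Q_scale_left)
lemma Q_diff_right: "Q z (x - y) = Q z x - Q z y"
  by (metis Q_sym Q_diff_left)
lemma Q_sum_right: "Q z (sum f S) = (\<Sum>i\<in>S. Q z (f i))"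
  by (metis (no_types, lifting) Q_sym Q_sum_left sum.cong)

lemma Q_nondeg:
  fixes n :: "('n::finite) lv"
  assumes "n \<noteq> 0" shows "\<exists>z. Q z n \<noteq> 0"
proof -
  obtain k kh m where n: "n = (k, kh, m)" by (cases n) auto
  show ?thesis
  proof (cases "m = 0")
    case False
    then have "Q (0, 0, m) n \<noteq> 0" by (simp add: Q_def n)
    then show ?thesis by blast
  next
    case True
    show ?thesis
    proof (cases "k = 0")
      case False
      then have "Q (0, 1, 0) n \<noteq> 0" by (simp add: Q_def n)
      then show ?thesis by blast
    next
      case True
      with \<open>m = 0\<close> assms n have "kh \<noteq> 0" by (auto simp: zero_prod_def)
      then have "Q (1, 0, 0) n \<noteq> 0" by (simp add: Q_def n)
      then show ?thesis by blast
    qed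
  qed
qed

lemma indep_card:
  fixes S :: "('n::finite) lv set"
  assumes "independent S" shows "card S \<le> CARD('n) + 2"
  using independent_bound[OF assms] by simp

lemma gram_sum:
  assumes "finite A" "j \<in> A"
    and "\<And>i. i \<in> A \<Longrightarrow> Q (b i) (b j) = (if i = j then 1 else -1)"
  shows "(\<Sum>i\<in>A. \<alpha> i * Q (b i) (b j)) = 2 * \<alpha> j - (\<Sum>i\<in>A. \<alpha> i)"
proof -
  have "(\<Sum>i\<in>A. \<alpha> i * Q (b i) (b j)) = (\<Sum>i\<in>A. - \<alpha> i + (if i = j then 2 * \<alpha> i else 0))"
    by (rule sum.cong) (auto simp: assms(3))
  also have "\<dots> = (\<Sum>i\<in>A. - \<alpha> i) + (\<Sum>i\<in>A. (if i = j then 2 * \<alpha> i else 0))"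
    by (rule sum.distrib)
  also have "(\<Sum>i\<in>A. (if i = j then 2 * \<alpha> i else 0)) = 2 * \<alpha> j"
    using assms(1,2) by (simp add: sum.delta)
  also have "(\<Sum>i\<in>A. - \<alpha> i) + 2 * \<alpha> j = - (\<Sum>i\<in>A. \<alpha> i) + 2 * \<alpha> j"
    using assms(1,2) by (simp add: sum.distrib sum_negf)
  finally show ?thesis by simp
qed

lemma perp_zero:
  fixes b :: "'a \<Rightarrow> ('n::finite) lv"
  assumes fin: "finite A" and cA: "card A = CARD('n) + 1" and d2: "CARD('n) \<ge> 2"
    and G: "\<And>i j. i \<in> A \<Longrightarrow> j \<in> A \<Longrightarrow> Q (b i) (b j) = (if i = j then 1 else -1)"
    and perp: "\<And>j. j \<in> A \<Longrightarrow> Q (\<Sum>i\<in>A. \<alpha> i *\<^sub>R b i) (b j) = 0"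
  shows "\<And>i. i \<in> A \<Longrightarrow> \<alpha> i = 0"
proof -
  define S where "S = (\<Sum>i\<in>A. \<alpha> i)"
  have aj: "2 * \<alpha> j = S" if "j \<in> A" for j
  proof -
    have "0 = Q (\<Sum>i\<in>A. \<alpha> i *\<^sub>R b i) (b j)" using perp[OF that] by simp
    also have "\<dots> = (\<Sum>i\<in>A. \<alpha> i * Q (b i) (b j))" by (simp add: Q_sum_left Q_scale_left)
    also have "\<dots> = 2 * \<alpha> j - S" unfolding S_def
      by (rule gram_sum[OF fin that]) (simp add: G that)
    finally show ?thesis by simp
  qed
  have "S = (\<Sum>i\<in>A. S / 2)" unfolding S_def[symmetric] 
    by (subst (1) S_def, rule sum.cong) (use aj in fastforce)+
  also have "\<dots> = real (card A) * S / 2" by simp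
  finally have "S * (real (card A) - 2) = 0" by (simp add: algebra_simps)
  moreover have "real (card A) - 2 \<noteq> 0" using cA d2 by simp
  ultimately have "S = 0" by simp
  then show "\<And>i. i \<in> A \<Longrightarrow> \<alpha> i = 0" using aj by fastforce
qed

lemma line:
  fixes b :: "'a \<Rightarrow> ('n::finite) lv"
  assumes fin: "finite A" and cA: "card A = CARD('n) + 1" and d2: "CARD('n) \<ge> 2"
    and G: "\<And>i j. i \<in> A \<Longrightarrow> j \<in> A \<Longrightarrow> Q (b i) (b j) = (if i = j then 1 else -1)"
    and u: "\<And>j. j \<in> A \<Longrightarrow> Q u (b j) = 0"
    and v: "\<And>j. j \<in> A \<Longrightarrow> Q v (b j) = 0" and v0: "v \<noteq> 0"
  shows "\<exists>l. u = l *\<^sub>R v"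
proof (rule ccontr)
  assume nl: "\<nexists>l. u = l *\<^sub>R v"
  have injb: "inj_on b A"
  proof (rule inj_onI)
    fix i j assume "i \<in> A" "j \<in> A" "b i = b j"
    then have "Q (b i) (b j) = 1" using G[of j j] by simp
    then show "i = j" using G[OF \<open>i \<in> A\<close> \<open>j \<in> A\<close>] by (auto split: if_splits)
  qed
  have uv: "u \<noteq> v" using nl by (metis scaleR_one)
  have unb: "u \<notin> b ` A" using u G by fastforce
  have vnb: "v \<notin> b ` A" using v G by fastforce
  define S where "S = insert u (insert v (b ` A))"
  have finS: "finite S" using fin by (simp add: S_def)
  have "independent S"
  proof (rule independent_if_scalars_zero[OF finS])
    fix f x assume sum0: "(\<Sum>x\<in>S. f x *\<^sub>R x) = 0" and xS: "x \<in> S"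
    define w where "w = (\<Sum>i\<in>A. f (b i) *\<^sub>R b i)"
    have sumS: "(\<Sum>x\<in>S. f x *\<^sub>R x) = f u *\<^sub>R u + f v *\<^sub>R v + w"
      unfolding S_def w_def using fin uv unb vnb
      by (simp add: sum.reindex[OF injb] add.assoc)
    have wp: "Q w (b j) = 0" if "j \<in> A" for j
    proof -
      have "w = - (f u *\<^sub>R u + f v *\<^sub>R v)" using sum0 sumS by (metis add_eq_0_iff)
      then show ?thesis using u[OF that] v[OF that]
        by (simp add: Q_minus_left Q_add_left Q_scale_left Q_diff_left)
    qed
    have fb: "f (b i) = 0" if "i \<in> A" for i
      using perp_zero[OF fin cA d2 G, of "\<lambda>i. f (b i)", folded w_def] wp that by blast
    have "w = 0" unfolding w_def using fb by simp
    then have uv0: "f u *\<^sub>R u + f v *\<^sub>R v = 0" using sum0 sumS by simp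
    have fu: "f u = 0"
    proof (rule ccontr)
      assume "f u \<noteq> 0"
      then have "u = (- f v / f u) *\<^sub>R v" using uv0
        by (metis (no_types, lifting) add.commute add_eq_0_iff divide_inverse_commute scaleR_right.minus scaleR_scaleR scale_minus_left inverse_eq_divide scaleR_left.minus  eq_vector_fraction_iff divide_minus_left)
      then show False using nl by blast
    qed
    then have fv: "f v = 0" using uv0 v0 by simp
    show "f x = 0" using xS fu fv fb unfolding S_def by auto
  qed
  then have "card S \<le> CARD('n) + 2" by (rule indep_card)
  moreover have "card S = CARD('n) + 3"
    unfolding S_def using fin uv unb vnb by (simp add: card_image[OF injb] cA)
  ultimately show False by simp
qed

lemma three_ge2:
  fixes b :: "'a \<Rightarrow> ('n::finite) lv"
  assumes fin: "finite A" and cA: "card A = CARD('n) + 1" and d2: "CARD('n) \<ge> 2"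
    and G: "\<And>i j. i \<in> A \<Longrightarrow> j \<in> A \<Longrightarrow> Q (b i) (b j) = (if i = j then 1 else -1)"
    and sol: "\<And>p. p \<in> {x,y,z} \<Longrightarrow> Q p p = 1 \<and> (\<forall>j\<in>A. Q p (b j) = -1)"
    and dist: "x \<noteq> y" "y \<noteq> z" "x \<noteq> z"
  shows False
proof -
  define d where "d = real (card A)"
  have d3: "d \<ge> 3" using cA d2 unfolding d_def by simp
  define c where "c = 1 / (d - 2)"
  have c0: "c > 0" using d3 unfolding c_def by simp
  define w where "w = c *\<^sub>R (\<Sum>i\<in>A. b i)"
  have Qwb: "Q w (b j) = -1" if "j \<in> A" for j
  proof -
    have "(\<Sum>i\<in>A. 1 * Q (b i) (b j)) = 2 * 1 - (\<Sum>i\<in>A. 1)"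
      by (rule gram_sum[OF fin that]) (simp add: G that)
    then have "(\<Sum>i\<in>A. Q (b i) (b j)) = 2 - d" unfolding d_def by simp
    then show ?thesis unfolding w_def c_def using d3 by (simp add: Q_scale_left Q_sum_left divide_simps)
  qed
  have Qxw: "Q p w = - c * d" if "p \<in> {x,y,z}" for p
  proof -
    have "Q p w = c * (\<Sum>i\<in>A. Q p (b i))" unfolding w_def by (simp add: Q_scale_right Q_sum_right)
    also have "\<dots> = c * (\<Sum>i\<in>A. -1)" using sol[OF that] by simp
    finally show ?thesis unfolding d_def by simp
  qed
  have Qww: "Q w w = - c * d"
  proof -
    have "Q w w = c * (\<Sum>i\<in>A. Q (b i) w)" unfolding w_def by (simp add: Q_scale_left Q_sum_left)
    also have "\<dots> = c * (\<Sum>i\<in>A. -1)" using Qwb by (simp add: Q_sym)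
    finally show ?thesis unfolding d_def by simp
  qed
  define s where "s = 1 + c * d"
  have s0: "s > 0" unfolding s_def using c0 d3 by (simp add: add_pos_nonneg)
  have eperp: "Q (p - w) (b j) = 0" if "p \<in> {x,y,z}" "j \<in> A" for p j
    using sol[OF that(1)] Qwb[OF that(2)] that(2) by (simp add: Q_diff_left)
  have enorm: "Q (p - w) (p - w) = s" if "p \<in> {x,y,z}" for p
    using sol[OF that] Qxw[OF that] Qww
    by (simp add: Q_diff_left Q_diff_right Q_sym[of w p] s_def algebra_simps)
  have ex0: "x - w \<noteq> 0" using enorm[of x] s0 by auto
  have lam: "\<exists>l. p - w = l *\<^sub>R (x - w) \<and> l * l = 1" if pin: "p \<in> {x,y,z}" for p
  proof -
    obtain l where l: "p - w = l *\<^sub>R (x - w)"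
      using line[OF fin cA d2 G, of "p - w" "x - w"] eperp[OF pin] eperp[of x] ex0 by auto
    have "s = Q (l *\<^sub>R (x - w)) (l *\<^sub>R (x - w))" using enorm[OF pin] l by simp
    also have "\<dots> = l * l * s" using enorm[of x] by (simp add: Q_scale_left Q_scale_right)
    finally have "l * l = 1" using s0 by simp
    with l show ?thesis by blast
  qed
  obtain l where l: "y - w = l *\<^sub>R (x - w)" "l * l = 1" using lam by blast
  obtain m where m: "z - w = m *\<^sub>R (x - w)" "m * m = 1" using lam by blast
  have "l = 1 \<or> l = -1" using l(2) by (metis mult_cancel_left1 square_eq_1_iff)
  moreover have "m = 1 \<or> m = -1" using m(2) by (metis mult_cancel_left1 square_eq_1_iff)
  ultimately show False using l(1) m(1) dist by (metis scaleR_one scaleR_minus1_left diff_add_cancel add_left_cancel)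
qed

lemma two_d1:
  fixes b1 b2 x y :: "('n::finite) lv"
  assumes d1: "CARD('n) = 1"
    and G: "Q b1 b1 = 1" "Q b2 b2 = 1" "Q b1 b2 = -1" and nneg: "b2 \<noteq> - b1"
    and sx: "Q x x = 1" "Q x b1 = -1" "Q x b2 = -1"
    and sy: "Q y y = 1" "Q y b1 = -1" "Q y b2 = -1"
    and xy: "x \<noteq> y"
  shows False
proof -
  define n where "n = b1 + b2"
  have n0: "n \<noteq> 0" unfolding n_def using nneg by (metis add_eq_0_iff)
  have Qnb1: "Q n b1 = 0" and Qnb2: "Q n b2 = 0" unfolding n_def using G
    by (simp_all add: Q_add_left Q_sym[of b2 b1])
  have Qnn: "Q n n = 0" using Qnb1 Qnb2 by (simp add: n_def Q_add_right)
  have Qxn: "Q x n = -2" using sx by (simp add: n_def Q_add_right)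
  define u where "u = y - x"
  have Qub1: "Q u b1 = 0" and Qun: "Q u n = 0" using sx sy
    by (simp_all add: u_def Q_diff_left n_def Q_add_right)
  obtain z where z: "Q z n \<noteq> 0" using Q_nondeg[OF n0] by blast
  show False
  proof (cases "\<exists>l. u = l *\<^sub>R n")
    case True
    then obtain l where l: "u = l *\<^sub>R n" by blast
    have "y = x + l *\<^sub>R n" using l unfolding u_def by (simp add: algebra_simps)
    then have "Q y y = Q x x + 2 * l * Q x n + l * l * Q n n"
      by (simp add: Q_add_left Q_add_right Q_scale_left Q_scale_right Q_sym[of n x] algebra_simps)
    then have "l = 0" using sx sy Qxn Qnn by simp
    then show False using l xy unfolding u_def by simp
  next
    case nl: False
    have d1: "b1 \<noteq> u" "b1 \<noteq> n" "b1 \<noteq> z" "u \<noteq> n" "u \<noteq> z" "n \<noteq> z"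
    proof -
      show "b1 \<noteq> u" using G(1) Qub1 by auto
      show "b1 \<noteq> n" using G(1) Qnb1 by auto
      show "b1 \<noteq> z" using Qnb1 z Q_sym[of z n] by auto
      show "u \<noteq> n" using nl by (metis scaleR_one)
      show "u \<noteq> z" using Qun z by auto
      show "n \<noteq> z" using Qnn z by auto
    qed
    define S where "S = {b1, u, n, z}"
    have "independent S"
    proof (rule independent_if_scalars_zero)
      show "finite S" by (simp add: S_def)
      fix f p assume s0: "(\<Sum>x\<in>S. f x *\<^sub>R x) = 0" and pS: "p \<in> S"
      have sumS: "(\<Sum>x\<in>S. f x *\<^sub>R x) = f b1 *\<^sub>R b1 + f u *\<^sub>R u + f n *\<^sub>R n + f z *\<^sub>R z"
        unfolding S_def using d1 by (simp add: add.assoc)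
      have eq: "f b1 *\<^sub>R b1 + f u *\<^sub>R u + f n *\<^sub>R n + f z *\<^sub>R z = 0" using s0 sumS by simp
      have "Q (f b1 *\<^sub>R b1 + f u *\<^sub>R u + f n *\<^sub>R n + f z *\<^sub>R z) n = 0" using eq by simp
      then have "f z * Q z n = 0" using Qnb1 Qun Qnn
        by (simp add: Q_add_left Q_scale_left Q_sym[of b1 n])
      then have fz: "f z = 0" using z by simp
      have "Q (f b1 *\<^sub>R b1 + f u *\<^sub>R u + f n *\<^sub>R n + f z *\<^sub>R z) b1 = 0" using eq by simp
      then have fb: "f b1 = 0" using G Qub1 Qnb1 fz
        by (simp add: Q_add_left Q_scale_left)
      have un: "f u *\<^sub>R u + f n *\<^sub>R n = 0" using eq fz fb by simp
      have fu: "f u = 0"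
      proof (rule ccontr)
        assume "f u \<noteq> 0"
        then have "u = (- f n / f u) *\<^sub>R n" using un
          by (metis (no_types, lifting) add.commute add_eq_0_iff divide_inverse_commute scaleR_right.minus scaleR_scaleR scale_minus_left inverse_eq_divide scaleR_left.minus  eq_vector_fraction_iff divide_minus_left)
        then show False using nl by blast
      qed
      then have fn: "f n = 0" using un n0 by simp
      show "f p = 0" using pS fz fb fu fn unfolding S_def by auto
    qed
    then have "card S \<le> CARD('n) + 2" by (rule indep_card)
    moreover have "card S = 4" unfolding S_def using d1 by simp
    ultimately show False using \<open>CARD('n) = 1\<close> by simp
  qed
qed



definition lb :: "real^('n::finite) \<Rightarrow> real \<Rightarrow> 'n lv" where
  "lb c r = (1 / r, (c \<bullet> c - r * r) / r, (1 / r) *\<^sub>R c)"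

definition lh :: "real^('n::finite) \<Rightarrow> real \<Rightarrow> 'n lv" where
  "lh a b = (0, - 2 * b / norm a, - (1 / norm a) *\<^sub>R a)"

lemma Q_lb_lb:
  assumes "r1 > 0" "r2 > 0"
  shows "Q (lb c1 r1) (lb c2 r2) = (r1 * r1 + r2 * r2 - (dist c1 c2)^2) / (2 * r1 * r2)"
proof -
  have d: "(dist c1 c2)^2 = c1 \<bullet> c1 - 2 * (c1 \<bullet> c2) + c2 \<bullet> c2"
    by (simp add: dist_norm power2_norm_eq_inner inner_diff_left inner_diff_right inner_commute)
  show ?thesis unfolding Q_def lb_def d using assms
    by (simp add: field_simps)
qed

lemma Q_lb_self: "r > 0 \<Longrightarrow> Q (lb c r) (lb c r) = 1"
  by (simp add: Q_lb_lb)

lemma Q_lh_self: "a \<noteq> 0 \<Longrightarrow> Q (lh a b) (lh a b) = 1"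
  unfolding Q_def lh_def by (simp add: dot_square_norm power2_eq_square)

lemma Q_lb_lh:
  assumes "r > 0" "a \<noteq> 0"
  shows "Q (lb c r) (lh a b) = (b - a \<bullet> c) / (r * norm a)"
  unfolding Q_def lb_def lh_def using assms by (simp add: field_simps inner_commute)

lemma Q_lh_lh:
  assumes "a1 \<noteq> 0" "a2 \<noteq> 0"
  shows "Q (lh a1 b1) (lh a2 b2) = (a1 \<bullet> a2) / (norm a1 * norm a2)"
  unfolding Q_def lh_def using assms by (simp add: field_simps)

lemma tang_bb:
  fixes c1 c2 :: "real^'n::finite"
  assumes r: "r1 > 0" "r2 > 0" and disj: "ball c1 r1 \<inter> ball c2 r2 = {}"
    and p: "p \<in> cball c1 r1" "p \<in> cball c2 r2"
  shows "Q (lb c1 r1) (lb c2 r2) = -1"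
proof -
  have le: "dist c1 c2 \<le> r1 + r2" using p dist_triangle[of c1 c2 p]
    by (simp add: dist_commute)
  have ge: "dist c1 c2 \<ge> r1 + r2"
  proof (rule ccontr)
    assume lt: "\<not> ?thesis"
    define t where "t = r1 / (r1 + r2)"
    define q where "q = c1 + t *\<^sub>R (c2 - c1)"
    have t: "0 < t" "t < 1" "1 - t = r2 / (r1 + r2)" using r unfolding t_def by (auto simp: field_simps)
    have "dist c1 q = t * dist c1 c2" unfolding q_def using t by (simp add: dist_norm norm_minus_commute)
    also have "\<dots> < t * (r1 + r2)" using lt t by simp
    also have "\<dots> = r1" using r unfolding t_def by simp
    finally have q1: "q \<in> ball c1 r1" by simp
    have "c2 - q = (1 - t) *\<^sub>R (c2 - c1)" unfolding q_def by (simp add: algebra_simps)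
    then have "dist c2 q = (1 - t) * dist c1 c2" using t r by (simp add: dist_norm norm_minus_commute)
    also have "\<dots> < (1 - t) * (r1 + r2)" by (rule mult_strict_left_mono) (use lt t in auto)
    also have "\<dots> = r2" using r t(3) by simp
    finally have q2: "q \<in> ball c2 r2" by simp
    show False using q1 q2 disj by blast
  qed
  have "dist c1 c2 = r1 + r2" using le ge by simp
  then show ?thesis using r by (simp add: Q_lb_lb field_simps power2_eq_square)
qed

lemma tang_be:
  fixes c1 c2 :: "real^'n::finite"
  assumes r: "r1 > 0" "r2 > 0" and disj: "ball c1 r1 \<inter> - cball c2 r2 = {}"
    and p: "p \<in> cball c1 r1" "p \<notin> ball c2 r2"
  shows "Q (lb c1 r1) (- lb c2 r2) = -1"
proof -
  have "ball c1 r1 \<subseteq> cball c2 r2" using disj by blast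
  then have le: "dist c1 c2 + r1 \<le> r2" using r by (simp add: ball_subset_cball_iff)
  have ge: "r2 \<le> dist c1 c2 + r1" using p dist_triangle[of c2 p c1]
    by (simp add: dist_commute)
  have "dist c1 c2 = r2 - r1" using le ge by simp
  moreover have "Q (lb c1 r1) (- lb c2 r2) = - Q (lb c1 r1) (lb c2 r2)" by (metis Q_minus_left Q_sym)
  ultimately have "Q (lb c1 r1) (- lb c2 r2) = - ((r1*r1 + r2*r2 - (r2-r1)^2)/(2*r1*r2))"
    using r by (simp add: Q_lb_lb)
  also have "\<dots> = -1" using r by (simp add: field_simps power2_eq_square)
  finally show ?thesis .
qed

lemma tang_bh:
  fixes c a :: "real^'n::finite"
  assumes r: "r > 0" and a: "a \<noteq> 0" and disj: "ball c r \<inter> {x. a \<bullet> x < b} = {}"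
    and p: "p \<in> cball c r" "a \<bullet> p \<le> b"
  shows "Q (lb c r) (lh a b) = -1"
proof -
  have na: "norm a > 0" using a by simp
  have le: "a \<bullet> c \<le> b + r * norm a"
  proof -
    have e: "a \<bullet> c = a \<bullet> p + a \<bullet> (c - p)" by (simp add: inner_diff_right)
    have f: "a \<bullet> (c - p) \<le> norm a * norm (c - p)" by (rule norm_cauchy_schwarz)
    have "norm (c - p) \<le> r" using p(1) by (simp add: dist_norm)
    then have g: "norm a * norm (c - p) \<le> norm a * r" using na by (simp add: mult_left_mono)
    show ?thesis using e f g p(2) by (simp add: mult.commute)
  qed
  have ge: "a \<bullet> c - r * norm a \<ge> b"
  proof (rule ccontr)
    assume lt: "\<not> ?thesis"
    define t where "t = max 0 ((a \<bullet> c - b) / norm a)"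
    have tr: "t < r" using lt na r unfolding t_def by (auto simp: field_simps)
    define s where "s = (r + t) / 2"
    have s: "s < r" "s > t" "s \<ge> 0" using tr unfolding s_def t_def by auto
    define q where "q = c - (s / norm a) *\<^sub>R a"
    have "dist c q = s" unfolding q_def using na s by (simp add: dist_norm)
    then have q1: "q \<in> ball c r" using s by simp
    have "a \<bullet> q = a \<bullet> c - s * norm a" unfolding q_def using na
      by (simp add: inner_diff_right dot_square_norm power2_eq_square)
    moreover have "s * norm a > a \<bullet> c - b"
    proof -
      have "(a \<bullet> c - b) / norm a < s" using s unfolding t_def by linarith
      then show ?thesis using na by (simp add: field_simps)
    qed
    ultimately have "a \<bullet> q < b" by simp
    then show False using q1 disj by blast
  qed
  have "b - a \<bullet> c = - (r * norm a)" using le ge by simp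
  then show ?thesis using r na by (simp add: Q_lb_lh)
qed

lemma ee_overlap:
  fixes c1 c2 :: "real^'n::finite"
  shows "- cball c1 r1 \<inter> - cball c2 r2 \<noteq> {}"
proof
  assume "- cball c1 r1 \<inter> - cball c2 r2 = {}"
  then have "UNIV = cball c1 r1 \<union> cball c2 r2" by blast
  then have "bounded (UNIV :: (real^'n) set)" by (metis bounded_Un bounded_cball)
  then show False by simp
qed

lemma eh_overlap:
  fixes c a :: "real^'n::finite"
  assumes a: "a \<noteq> 0"
  shows "- cball c r \<inter> {x. a \<bullet> x < b} \<noteq> {}"
proof -
  have na: "norm a > 0" using a by simp
  define K where "K = \<bar>a \<bullet> c\<bar> + \<bar>b\<bar> + \<bar>r\<bar> * norm a + 1"
  have K0: "K > 0" unfolding K_def by (smt (verit) abs_ge_zero mult_nonneg_nonneg norm_ge_zero)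
  define t where "t = K / (norm a * norm a)"
  define x where "x = c - t *\<^sub>R a"
  have "a \<bullet> x = a \<bullet> c - t * (norm a * norm a)" unfolding x_def
    by (simp add: inner_diff_right dot_square_norm power2_eq_square)
  also have "\<dots> = a \<bullet> c - K" unfolding t_def using na by (simp add: field_simps)
  also have "\<dots> < b" unfolding K_def using na by (smt (verit) abs_ge_self mult_nonneg_nonneg norm_ge_zero abs_ge_zero)
  finally have x1: "a \<bullet> x < b" .
  have "dist c x = t * norm a" unfolding x_def t_def using na K0 by (simp add: dist_norm)
  also have "\<dots> = K / norm a" unfolding t_def using na by (simp add: field_simps)
  also have "\<dots> > r"
  proof -
    have "K > r * norm a" unfolding K_def using na
      by (smt (verit) abs_ge_self mult_right_mono norm_ge_zero abs_ge_zero mult_nonneg_nonneg)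
    then show ?thesis using na by (simp add: field_simps)
  qed
  finally have "x \<in> - cball c r" by simp
  with x1 show ?thesis by blast
qed

lemma tang_hh:
  fixes a1 a2 :: "real^'n::finite"
  assumes a: "a1 \<noteq> 0" "a2 \<noteq> 0" and disj: "{x. a1 \<bullet> x < b1} \<inter> {x. a2 \<bullet> x < b2} = {}"
  shows "Q (lh a1 b1) (lh a2 b2) = -1"
proof -
  have n: "norm a1 > 0" "norm a2 > 0" using a by auto
  have cs: "- (a1 \<bullet> a2) \<le> norm a1 * norm a2"
    using norm_cauchy_schwarz[of "- a1" a2] by simp
  have eq: "a1 \<bullet> a2 = - (norm a1 * norm a2)"
  proof (rule ccontr)
    assume ne: "\<not> ?thesis"
    define K where "K = norm a1 * norm a2 + a1 \<bullet> a2"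
    have K: "K > 0" using cs ne unfolding K_def by linarith
    define t where "t = (\<bar>b1\<bar> / norm a1 + \<bar>b2\<bar> / norm a2 + 1) / K"
    define x where "x = - t *\<^sub>R (norm a2 *\<^sub>R a1 + norm a1 *\<^sub>R a2)"
    have tK: "t * K = \<bar>b1\<bar> / norm a1 + \<bar>b2\<bar> / norm a2 + 1" unfolding t_def using K by simp
    have d1: "a1 \<bullet> x = - t * norm a1 * K" unfolding x_def K_def
      by (simp add: inner_add_right dot_square_norm power2_eq_square algebra_simps)
    have d2: "a2 \<bullet> x = - t * norm a2 * K" unfolding x_def K_def
      by (simp add: inner_add_right dot_square_norm power2_eq_square algebra_simps inner_commute)
    have p1: "\<bar>b1\<bar> / norm a1 \<ge> 0" "\<bar>b2\<bar> / norm a2 \<ge> 0" using n by auto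
    have "\<bar>b1\<bar> / norm a1 < t * K" unfolding tK using p1 by linarith
    then have lt1: "norm a1 * (\<bar>b1\<bar> / norm a1) < norm a1 * (t * K)" using n by (simp add: pos_divide_less_eq mult.commute)
    have "a1 \<bullet> x = - norm a1 * (t * K)" using d1 by simp
    also have "\<dots> < - norm a1 * (\<bar>b1\<bar> / norm a1)" using lt1 by simp
    also have "\<dots> \<le> b1" using n by simp
    finally have x1: "a1 \<bullet> x < b1" .
    have "\<bar>b2\<bar> / norm a2 < t * K" unfolding tK using p1 by linarith
    then have lt2: "norm a2 * (\<bar>b2\<bar> / norm a2) < norm a2 * (t * K)" using n by (simp add: pos_divide_less_eq mult.commute)
    have "a2 \<bullet> x = - norm a2 * (t * K)" using d2 by simp
    also have "\<dots> < - norm a2 * (\<bar>b2\<bar> / norm a2)" using lt2 by simp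
    also have "\<dots> \<le> b2" using n by simp
    finally have x2: "a2 \<bullet> x < b2" .
    show False using x1 x2 disj by blast
  qed
  then show ?thesis using n a by (simp add: Q_lh_lh)
qed

definition dec :: "('n::finite) lv \<Rightarrow> (real^'n) option set" where
  "dec X = (if fst X > 0 then Some ` cball ((1 / fst X) *\<^sub>R snd (snd X)) (1 / fst X)
            else if fst X < 0 then insert None (Some ` (- ball ((1 / fst X) *\<^sub>R snd (snd X)) (- 1 / fst X)))
            else insert None (Some ` {x. (- snd (snd X)) \<bullet> x \<le> - fst (snd X) / 2}))"

lemma dec_lb: "r > 0 \<Longrightarrow> dec (lb c r) = Some ` cball c r"
  unfolding dec_def lb_def by simp

lemma dec_neg_lb: "r > 0 \<Longrightarrow> dec (- lb c r) = insert None (Some ` (- ball c r))"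
  unfolding dec_def lb_def by simp

lemma dec_lh: "a \<noteq> 0 \<Longrightarrow> dec (lh a b) = insert None (Some ` {x. a \<bullet> x \<le> b})"
proof -
  assume a: "a \<noteq> 0"
  then have na: "norm a > 0" by simp
  have "{x. (1 / norm a) *\<^sub>R a \<bullet> x \<le> b / norm a} = {x. a \<bullet> x \<le> b}"
    using na by (auto simp: divide_le_cancel field_simps)
  then show ?thesis unfolding dec_def lh_def by simp
qed

lemma dec_neg_lh: "a \<noteq> 0 \<Longrightarrow> dec (- lh a b) = insert None (Some ` {x. a \<bullet> x \<ge> b})"
proof -
  assume a: "a \<noteq> 0"
  then have na: "norm a > 0" by simp
  have "{x. - ((1 / norm a) *\<^sub>R a \<bullet> x) \<le> - (b / norm a)} = {x. a \<bullet> x \<ge> b}"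
    using na by (auto simp: divide_le_cancel field_simps)
  then show ?thesis unfolding dec_def lh_def by simp
qed

definition repr :: "(real^('n::finite)) option set \<Rightarrow> 'n lv \<Rightarrow> bool" where
  "repr S X \<longleftrightarrow>
     (\<exists>c r. r > 0 \<and> S = Some ` cball c r \<and> X = lb c r) \<or>
     (\<exists>c r. r > 0 \<and> S = insert None (Some ` (- ball c r)) \<and> X = - lb c r) \<or>
     (\<exists>a b. a \<noteq> 0 \<and> S = insert None (Some ` {x. a \<bullet> x \<le> b}) \<and> X = lh a b)"

lemma repr_ex: "is_dball S \<Longrightarrow> \<exists>X. repr S X"
  unfolding is_dball_def repr_def by blast

lemma repr_dec: "repr S X \<Longrightarrow> S = dec X"
  unfolding repr_def by (auto simp: dec_lb dec_neg_lb dec_lh)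

lemma Qneg_r: "Q x (- y) = - Q x y"
  by (metis Q_minus_left Q_sym)

lemma repr_Q1: "repr S X \<Longrightarrow> Q X X = 1"
  unfolding repr_def by (auto simp: Q_lb_self Q_lh_self Q_minus_left Qneg_r)

lemma fp_Some: "finite_part (Some ` S) = S"
  unfolding finite_part_def by auto

lemma fp_ins: "finite_part (insert None (Some ` S)) = S"
  unfolding finite_part_def by auto

lemma int_ext: "r > 0 \<Longrightarrow> interior (- ball c r) = - cball (c::real^'n::finite) r "
  by (simp add: interior_complement)


lemma repr_tang:
  fixes S T :: "(real^('n::finite)) option set"
  assumes S: "repr S X" and T: "repr T Y" and dj: "disjoint_interiors S T"
    and p: "p \<in> S" "p \<in> T"
  shows "Q X Y = -1"
  using S
proof (unfold repr_def, elim disjE exE conjE)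
  fix c1 r1 assume r1: "r1 > 0" and S1: "S = Some ` cball c1 r1" and X: "X = lb c1 r1"
  show ?thesis using T
  proof (unfold repr_def, elim disjE exE conjE)
    fix c2 r2 assume r2: "r2 > 0" and T2: "T = Some ` cball c2 r2" and Y: "Y = lb c2 r2"
    obtain q where "p = Some q" "q \<in> cball c1 r1" "q \<in> cball c2 r2" using p S1 T2 by auto
    moreover have "ball c1 r1 \<inter> ball c2 r2 = {}" using dj S1 T2 by (simp add: disjoint_interiors_def fp_Some)
    ultimately show ?thesis using tang_bb r1 r2 X Y by blast
  next
    fix c2 r2 assume r2: "r2 > 0" and T2: "T = insert None (Some ` (- ball c2 r2))" and Y: "Y = - lb c2 r2"
    obtain q where "q \<in> cball c1 r1" "q \<notin> ball c2 r2" using p S1 T2 by auto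
    moreover have "ball c1 r1 \<inter> - cball c2 r2 = {}" using dj S1 T2 r2 by (simp add: disjoint_interiors_def fp_Some fp_ins int_ext)
    ultimately show ?thesis using tang_be r1 r2 X Y by blast
  next
    fix a b assume a: "a \<noteq> 0" and T2: "T = insert None (Some ` {x. a \<bullet> x \<le> b})" and Y: "Y = lh a b"
    obtain q where "q \<in> cball c1 r1" "a \<bullet> q \<le> b" using p S1 T2 by auto
    moreover have "ball c1 r1 \<inter> {x. a \<bullet> x < b} = {}" using dj S1 T2 a by (simp add: disjoint_interiors_def fp_Some fp_ins)
    ultimately show ?thesis using tang_bh r1 a X Y by blast
  qed
next
  fix c1 r1 assume r1: "r1 > 0" and S1: "S = insert None (Some ` (- ball c1 r1))" and X: "X = - lb c1 r1"
  show ?thesis using T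
  proof (unfold repr_def, elim disjE exE conjE)
    fix c2 r2 assume r2: "r2 > 0" and T2: "T = Some ` cball c2 r2" and Y: "Y = lb c2 r2"
    obtain q where "q \<in> cball c2 r2" "q \<notin> ball c1 r1" using p S1 T2 by auto
    moreover have "ball c2 r2 \<inter> - cball c1 r1 = {}" using dj S1 T2 r1 by (auto simp: disjoint_interiors_def fp_Some fp_ins int_ext)
    ultimately have "Q Y X = -1" using tang_be r1 r2 X Y by blast
    then show ?thesis by (simp add: Q_sym)
  next
    fix c2 r2 assume r2: "r2 > 0" and T2: "T = insert None (Some ` (- ball c2 r2))" and Y: "Y = - lb c2 r2"
    have "- cball c1 r1 \<inter> - cball c2 r2 = {}" using dj S1 T2 r1 r2 by (simp add: disjoint_interiors_def fp_ins int_ext)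
    then show ?thesis using ee_overlap by blast
  next
    fix a b assume a: "a \<noteq> 0" and T2: "T = insert None (Some ` {x. a \<bullet> x \<le> b})" and Y: "Y = lh a b"
    have "- cball c1 r1 \<inter> {x. a \<bullet> x < b} = {}" using dj S1 T2 r1 a by (simp add: disjoint_interiors_def fp_ins int_ext)
    then show ?thesis using eh_overlap a by blast
  qed
next
  fix a1 b1 assume a1: "a1 \<noteq> 0" and S1: "S = insert None (Some ` {x. a1 \<bullet> x \<le> b1})" and X: "X = lh a1 b1"
  show ?thesis using T
  proof (unfold repr_def, elim disjE exE conjE)
    fix c2 r2 assume r2: "r2 > 0" and T2: "T = Some ` cball c2 r2" and Y: "Y = lb c2 r2"
    obtain q where "q \<in> cball c2 r2" "a1 \<bullet> q \<le> b1" using p S1 T2 by auto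
    moreover have "ball c2 r2 \<inter> {x. a1 \<bullet> x < b1} = {}" using dj S1 T2 a1 by (auto simp: disjoint_interiors_def fp_Some fp_ins)
    ultimately have "Q Y X = -1" using tang_bh r2 a1 X Y by blast
    then show ?thesis by (simp add: Q_sym)
  next
    fix c2 r2 assume r2: "r2 > 0" and T2: "T = insert None (Some ` (- ball c2 r2))" and Y: "Y = - lb c2 r2"
    have "- cball c2 r2 \<inter> {x. a1 \<bullet> x < b1} = {}" using dj S1 T2 r2 a1 by (auto simp: disjoint_interiors_def fp_ins int_ext)
    then show ?thesis using eh_overlap a1 by blast
  next
    fix a b assume a: "a \<noteq> 0" and T2: "T = insert None (Some ` {x. a \<bullet> x \<le> b})" and Y: "Y = lh a b"
    have "{x. a1 \<bullet> x < b1} \<inter> {x. a \<bullet> x < b} = {}" using dj S1 T2 a1 a by (simp add: disjoint_interiors_def fp_ins)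
    then show ?thesis using tang_hh a1 a X Y by blast
  qed
qed

lemma sphere_two:
  fixes c :: "real^'n::finite"
  assumes r: "r > 0"
  shows "\<exists>p q. p \<noteq> q \<and> p \<in> cball c r \<and> p \<notin> ball c r \<and> q \<in> cball c r \<and> q \<notin> ball c r"
proof -
  define e :: "real^'n" where "e = axis undefined 1"
  have ne: "norm e = 1" unfolding e_def by simp
  have "dist c (c + r *\<^sub>R e) = r" "dist c (c - r *\<^sub>R e) = r" using ne r by (simp_all add: dist_norm)
  moreover have "c + r *\<^sub>R e \<noteq> c - r *\<^sub>R e"
  proof
    assume "c + r *\<^sub>R e = c - r *\<^sub>R e"
    then have "e \<bullet> (c + r *\<^sub>R e) = e \<bullet> (c - r *\<^sub>R e)" by (rule arg_cong)
    moreover have "e \<bullet> e = 1" using ne by (simp add: dot_square_norm)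
    ultimately show False using r by (simp add: inner_add_right inner_diff_right)
  qed
  ultimately show ?thesis by (metis mem_cball mem_ball order_refl less_irrefl)
qed

lemma repr_anti:
  fixes S T :: "(real^('n::finite)) option set"
  assumes S: "repr S X" and T: "repr T (- X)"
  shows "\<exists>p q. p \<noteq> q \<and> p \<in> S \<and> p \<in> T \<and> q \<in> S \<and> q \<in> T"
proof -
  have Td: "T = dec (- X)" using repr_dec[OF T] .
  show ?thesis using S
  proof (unfold repr_def, elim disjE exE conjE)
    fix c r assume r: "r > 0" and S1: "S = Some ` cball c r" and X: "X = lb c r"
    have T1: "T = insert None (Some ` (- ball c r))" using Td X r by (simp add: dec_neg_lb)
    obtain p q where "p \<noteq> q \<and> p \<in> cball c r \<and> p \<notin> ball c r \<and> q \<in> cball c r \<and> q \<notin> ball c r"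
      using sphere_two[OF r] by blast
    then show ?thesis using S1 T1 by (intro exI[of _ "Some p"] exI[of _ "Some q"]) auto
  next
    fix c r assume r: "r > 0" and S1: "S = insert None (Some ` (- ball c r))" and X: "X = - lb c r"
    have T1: "T = Some ` cball c r" using Td X r by (simp add: dec_lb)
    obtain p q where "p \<noteq> q \<and> p \<in> cball c r \<and> p \<notin> ball c r \<and> q \<in> cball c r \<and> q \<notin> ball c r"
      using sphere_two[OF r] by blast
    then show ?thesis using S1 T1 by (intro exI[of _ "Some p"] exI[of _ "Some q"]) auto
  next
    fix a b assume a: "a \<noteq> 0" and S1: "S = insert None (Some ` {x. a \<bullet> x \<le> b})" and X: "X = lh a b"
    have T1: "T = insert None (Some ` {x. a \<bullet> x \<ge> b})" using Td X a by (simp add: dec_neg_lh)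
    define p where "p = (b / (a \<bullet> a)) *\<^sub>R a"
    have "a \<bullet> a \<noteq> 0" using a by simp
    then have "a \<bullet> p = b" unfolding p_def by simp
    then show ?thesis using S1 T1 by (intro exI[of _ "None"] exI[of _ "Some p"]) auto
  qed
qed



theorem corollary3p5:
  fixes V :: "'v set" and E :: "'v \<Rightarrow> 'v \<Rightarrow> bool" and A C :: "'v set"
  assumes "finite V"
    and "\<And>u v. E u v \<Longrightarrow> u \<in> V \<and> v \<in> V"
    and "\<And>u v. E u v \<Longrightarrow> E v u"
    and "\<And>v. \<not> E v v"
    and "V = A \<union> C" and "A \<inter> C = {}"
    and "card A = CARD('n::finite) + 1" and "card C = 3"
    and "\<And>u v. u \<in> A \<Longrightarrow> v \<in> A \<Longrightarrow> u \<noteq> v \<Longrightarrow> E u v"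
    and "\<And>u v. u \<in> A \<Longrightarrow> v \<in> C \<Longrightarrow> E u v"
  shows "\<not> dball_packable TYPE('n) V E"
proof
  assume "dball_packable TYPE('n) V E"
  then obtain B :: "'v \<Rightarrow> (real^'n) option set" where BP: "ball_packable V E B"
    unfolding dball_packable_def by blast
  have bp: "inj_on B V \<and> (\<forall>v\<in>V. is_dball (B v)) \<and>
     (\<forall>u\<in>V. \<forall>v\<in>V. u \<noteq> v \<longrightarrow> disjoint_interiors (B u) (B v)) \<and>
     (\<forall>u\<in>V. \<forall>v\<in>V. u \<noteq> v \<longrightarrow> (E u v \<longleftrightarrow> (\<exists>!p. p \<in> B u \<inter> B v)))"
    using BP unfolding ball_packable_def by assumption
  have injB: "inj_on B V" using bp by (rule conjunct1)
  have isb: "is_dball (B v)" if "v \<in> V" for v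
    using bp[THEN conjunct2, THEN conjunct1] that by (rule bspec)
  have djB: "disjoint_interiors (B u) (B v)" if "u \<in> V" "v \<in> V" "u \<noteq> v" for u v
    using bp[THEN conjunct2, THEN conjunct2, THEN conjunct1, rule_format, OF that] .
  have tgB: "\<exists>!p. p \<in> B u \<inter> B v" if "u \<in> V" "v \<in> V" "u \<noteq> v" "E u v" for u v
    using bp[THEN conjunct2, THEN conjunct2, THEN conjunct2, rule_format, OF that(1-3), THEN iffD1, OF that(4)] .
  define X where "X v = (SOME Y. repr (B v) Y)" for v
  have rX: "repr (B v) (X v)" if "v \<in> V" for v
    unfolding X_def by (rule someI_ex, rule repr_ex) (rule isb[OF that])
  have Q1: "Q (X v) (X v) = 1" if "v \<in> V" for v using repr_Q1[OF rX[OF that]] .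
  have tang: "Q (X u) (X v) = -1" if "u \<in> V" "v \<in> V" "u \<noteq> v" "E u v" for u v
  proof -
    have "\<exists>!p. p \<in> B u \<inter> B v" by (rule tgB[OF that])
    then obtain p where "p \<in> B u" "p \<in> B v" by blast
    moreover have "disjoint_interiors (B u) (B v)" by (rule djB[OF that(1-3)])
    ultimately show ?thesis using repr_tang[OF rX[OF that(1)] rX[OF that(2)]] by blast
  qed
  have injX: "u = v" if "u \<in> V" "v \<in> V" "X u = X v" for u v
  proof -
    have "B u = B v" using repr_dec[OF rX[OF that(1)]] repr_dec[OF rX[OF that(2)]] that(3) by simp
    then show ?thesis using injB that unfolding inj_on_def by blast
  qed
  have finA: "finite A" using assms(1,5) by simp
  have AV: "A \<subseteq> V" and CV: "C \<subseteq> V" using assms(5) by auto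
  have G: "Q (X i) (X j) = (if i = j then 1 else -1)" if "i \<in> A" "j \<in> A" for i j
  proof (cases "i = j")
    case True then show ?thesis using Q1 that AV by auto
  next
    case False
    then have "E i j" using assms(9) that by blast
    then show ?thesis using tang[of i j] False that AV by auto
  qed
  obtain c1 c2 c3 where C: "C = {c1, c2, c3}" "c1 \<noteq> c2" "c2 \<noteq> c3" "c1 \<noteq> c3"
    using assms(8) by (auto simp: card_3_iff)
  have sol: "Q (X c) (X c) = 1 \<and> (\<forall>j\<in>A. Q (X c) (X j) = -1)" if "c \<in> C" for c
  proof -
    have "Q (X c) (X j) = -1" if "j \<in> A" for j
    proof -
      have "j \<noteq> c" using assms(6) that \<open>c \<in> C\<close> by blast
      then have "Q (X j) (X c) = -1" using tang[of j c] assms(10) that \<open>c \<in> C\<close> AV CV by blast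
      then show ?thesis by (simp add: Q_sym)
    qed
    then show ?thesis using Q1 that CV by blast
  qed
  have dX: "X c1 \<noteq> X c2" "X c2 \<noteq> X c3" "X c1 \<noteq> X c3" using injX C CV by blast+
  have "CARD('n) \<ge> 1" by (simp add: Suc_leI)
  then consider "CARD('n) \<ge> 2" | "CARD('n) = 1" by linarith
  then show False
  proof cases
    case 1
    show False
      by (rule three_ge2[OF finA assms(7) 1 G, of "X c1" "X c2" "X c3"])
         (use sol C dX in auto)
  next
    case 2
    then have "card A = 2" using assms(7) by simp
    then obtain a1 a2 where A2: "A = {a1, a2}" "a1 \<noteq> a2" by (auto simp: card_2_iff)
    have a12: "a1 \<in> V" "a2 \<in> V" using A2 AV by auto
    have nneg: "X a2 \<noteq> - X a1"
    proof
      assume eq: "X a2 = - X a1"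
      obtain p q where pq: "p \<noteq> q" "p \<in> B a1" "p \<in> B a2" "q \<in> B a1" "q \<in> B a2"
        using repr_anti[OF rX[OF a12(1)], of "B a2"] rX[OF a12(2)] eq by auto
      have "\<exists>!p. p \<in> B a1 \<inter> B a2" by (rule tgB[OF a12 A2(2)]) (use assms(9) A2 in auto)
      then show False using pq by blast
    qed
    show False
      by (rule two_d1[OF 2, of "X a1" "X a2" "X c1" "X c2"])
         (use G A2 nneg sol C dX in auto)
  qed
qed

end
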